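(* Let $X$ be a finite dimensional real Hilbert space, let $g:X\to\mathbb{R}$ be a convex function (finite everywhere) with $\min_{x\in X}g(x)<0$, let $C:=\{x\in X:g(x)\leq0\}$, and let $\bar{x}\in X$. Consider the following iteration. Set $x_{0}=\bar{x}$ and let $H_{0}=\{x:\langle c_{0},x\rangle\leq b\}$ be a set of this form with $C\subset H_{0}$ (possibly $c_{0}=0$, $b=0$, i.e. $H_{0}=X$). For $k=0,1,2,\dots$: choose $s_{k}\in\partial g(x_{k})$, let $\tilde{C}_{k}=\{x:g(x_{k})+\langle x-x_{k},s_{k}\rangle\leq0\}$, let $x_{k+1}=P_{H_{k}\cap\tilde{C}_{k}}(\bar{x})$, and let $H_{k+1}$ be the halfspace such that $x_{k+1}=P_{H_{k+1}}(\bar{x})$, namely $H_{k+1}=\{x:\langle\bar{x}-x_{k+1},x-x_{k+1}\rangle\leq0\}$. Suppose that $g(x_{k})>0$ for all $k\geq0$ (so that $x_{k}\notin\tilde{C}_{k}$ and all iterates are defined). Let $v_{k}:=d(\bar{x},C)^{2}-\|\bar{x}-x_{k}\|^{2}$. Then $v_{k}$ converges to zero at a rate $O(1/k)$, i.e. there is a constant $M$ with $v_{k}\leq M/k$ for all $k\geq1$.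
   Context: $P_{S}(y)$ denotes the projection of $y$ onto a nonempty closed convex set $S$; $d(y,S)$ is the distance from $y$ to $S$; $\partial g(x)$ is the convex subdifferential. Note $v_k$ is twice the gap between the optimal value $\frac12 d(\bar x,C)^2$ of $\min_{x\in C}\frac12\|x-\bar x\|^2$ and the value $\frac12\|\bar x-x_k\|^2$ of the relaxed problem. *)

theory Defs
  imports "HOL-Analysis.Analysis"
begin

definition subdifferential :: "('a::real_inner \<Rightarrow> real) \<Rightarrow> 'a \<Rightarrow> 'a set" where
  "subdifferential g x = {s. \<forall>y. g y \<ge> g x + inner s (y - x)}"

end

theory Submission
  imports Defs
begin

lemma rate_lemma:
  fixes v :: "nat \<Rightarrow> real" and c :: real
  assumes c: "c > 0" and nn: "\<And>k. v k \<ge> 0"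
    and dec: "\<And>k. k \<ge> 1 \<Longrightarrow> v (Suc k) \<le> v k - c * (v k)\<^sup>2"
  shows "\<forall>k\<ge>1. v k \<le> max (v 1) (1/c) / real k"
proof -
  define M where "M = max (v 1) (1/c)"
  have cM: "c * M \<ge> 1" unfolding M_def using c
    by (metis max.cobounded2 mult_left_mono less_imp_le nonzero_mult_div_cancel_left
        less_irrefl times_divide_eq_right mult.right_neutral)
  have M0: "M \<ge> 0" unfolding M_def using c by (simp add: max.coboundedI2)
  have "v k \<le> M / real k" if "k \<ge> 1" for k
    using that
  proof (induction k rule: dec_induct)
    case base
    then show ?case by (simp add: M_def)
  next
    case (step k)
    have k1: "real k \<ge> 1" using step.hyps by simp
    show ?case
    proof (cases "v k \<le> M / real (Suc k)")
      case True
      have "c * (v k)\<^sup>2 \<ge> 0" using c by simp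
      then have "v (Suc k) \<le> v k" using dec[OF step.hyps(1)] by linarith
      then show ?thesis using True by linarith
    next
      case False
      then have gt: "v k > M / (real k + 1)" by (simp add: add.commute)
      have a1: "c * v k > c * (M / (real k + 1))" using gt c by (intro mult_strict_left_mono)
      have a2: "c * (M / (real k + 1)) \<ge> 1 / (real k + 1)"
        using cM k1 by (simp add: divide_right_mono)
      have "c * v k > 1 / (real k + 1)" using a1 a2 by linarith
      then have "1 - c * v k < 1 - 1 / (real k + 1)" by linarith
      also have "1 - 1 / (real k + 1) = real k / (real k + 1)"
        using k1 by (simp add: field_simps)
      finally have "1 - c * v k \<le> real k / (real k + 1)" by simp
      then have "v k * (1 - c * v k) \<le> v k * (real k / (real k + 1))"
        using nn[of k] mult_left_mono by blast
      also have "\<dots> \<le> (M / real k) * (real k / (real k + 1))"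
        using step.IH k1 by (intro mult_right_mono) auto
      also have "\<dots> = M / (real k + 1)" using k1 by (simp add: field_simps)
      finally have "v k - c * (v k)\<^sup>2 \<le> M / (real k + 1)"
        by (simp add: algebra_simps power2_eq_square)
      then show ?thesis using dec[OF step.hyps(1)] by (simp add: add.commute)
    qed
  qed
  then show ?thesis unfolding M_def by blast
qed

theorem mainTheorem3:
  fixes g :: "'a::euclidean_space \<Rightarrow> real"
    and xbar c0 :: 'a and b :: real
    and x s :: "nat \<Rightarrow> 'a" and H :: "nat \<Rightarrow> 'a set"
  assumes conv: "convex_on UNIV g"
    and minneg: "\<exists>z. (\<forall>y. g z \<le> g y) \<and> g z < 0"
    and H0: "H 0 = {y. inner c0 y \<le> b}"
    and CH0: "{y. g y \<le> 0} \<subseteq> H 0"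
    and x0: "x 0 = xbar"
    and sub: "\<And>k. s k \<in> subdifferential g (x k)"
    and step: "\<And>k. x (Suc k) =
        closest_point (H k \<inter> {y. g (x k) + inner (y - x k) (s k) \<le> 0}) xbar"
    and Hstep: "\<And>k. H (Suc k) = {y. inner (xbar - x (Suc k)) (y - x (Suc k)) \<le> 0}"
    and pos: "\<And>k. g (x k) > 0"
  shows "\<exists>M. \<forall>k\<ge>1.
     (infdist xbar {y. g y \<le> 0})\<^sup>2 - (norm (xbar - x k))\<^sup>2 \<le> M / real k"
proof -
  define C where "C = {y. g y \<le> 0}"
  define d where "d = infdist xbar C"
  define n where "n k = norm (xbar - x k)" for k
  define v where "v k = d\<^sup>2 - (n k)\<^sup>2" for k
  define e where "e k = norm (x (Suc k) - x k)" for k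
  define D where "D k = H k \<inter> {y. g (x k) + inner (y - x k) (s k) \<le> 0}" for k
  obtain z where z: "\<forall>y. g z \<le> g y" "g z < 0" using minneg by blast
  have cont: "continuous_on UNIV g" using convex_on_continuous[OF open_UNIV conv] .
  have subg: "g y \<ge> g (x k) + inner (s k) (y - x k)" for k y
    using sub[of k] unfolding subdifferential_def by blast
  have Cclosed: "closed C" unfolding C_def
    by (rule closed_Collect_le[OF cont continuous_on_const])
  have zC: "z \<in> C" unfolding C_def using z by simp
  have Hcc: "closed (H k) \<and> convex (H k)" for k
  proof (cases k)
    case 0
    then show ?thesis using H0 closed_halfspace_le convex_halfspace_le by auto
  next
    case (Suc j)
    have "H k = {y. inner (xbar - x (Suc j)) y \<le> inner (xbar - x (Suc j)) (x (Suc j))}"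
      using Hstep[of j] Suc by (auto simp: inner_diff_right)
    then show ?thesis using closed_halfspace_le convex_halfspace_le by auto
  qed
  have Lset: "{y. g (x k) + inner (y - x k) (s k) \<le> 0} = {y. inner (s k) y \<le> inner (s k) (x k) - g (x k)}" for k
    by (auto simp: inner_diff_left inner_commute algebra_simps)
  have Dcc: "closed (D k) \<and> convex (D k)" for k
    unfolding D_def Lset using Hcc[of k]
    by (simp add: closed_Int convex_Int closed_halfspace_le convex_halfspace_le)
  have CD: "C \<subseteq> D k" if "C \<subseteq> H k" for k
  proof
    fix y assume y: "y \<in> C"
    have "g (x k) + inner (s k) (y - x k) \<le> 0" using subg[of k y] y unfolding C_def by simp
    then show "y \<in> D k" using that y unfolding D_def by (auto simp: inner_commute)
  qed
  have CH: "C \<subseteq> H k" for k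
  proof (induction k)
    case 0
    then show ?case using CH0 C_def by simp
  next
    case (Suc k)
    have "C \<subseteq> D k" using CD Suc by blast
    then show ?case unfolding Hstep
      using closest_point_dot[of "D k" _ xbar] Dcc[of k] step[of k] unfolding D_def[symmetric]
      by auto
  qed
  have Dne: "D k \<noteq> {}" for k using CD[OF CH[of k]] zC by blast
  have xin: "x (Suc k) \<in> D k" for k
    using closest_point_in_set[of "D k" xbar] Dcc[of k] Dne[of k] step[of k]
    unfolding D_def by simp
  obtain p where p: "p \<in> C" "d = dist xbar p"
    using infdist_attains_inf[OF Cclosed, of xbar] zC unfolding d_def by blast
  have d0: "d \<ge> 0" unfolding d_def by (rule infdist_nonneg)
  have n0: "n k \<ge> 0" for k unfolding n_def by simp
  have nle: "n k \<le> d" for k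
  proof (cases k)
    case 0
    then show ?thesis using x0 d0 n_def by simp
  next
    case (Suc j)
    have "p \<in> D j" using CD[OF CH[of j]] p by blast
    then have "dist xbar (x (Suc j)) \<le> dist xbar p"
      using closest_point_le[of "D j" p xbar] Dcc[of j] step[of j] unfolding D_def by simp
    then show ?thesis using Suc p unfolding n_def by (simp add: dist_norm)
  qed
  define R where "R = norm xbar + d"
  have R0: "R \<ge> 0" unfolding R_def using d0 by simp
  have xR: "norm (x k) \<le> R" for k
  proof -
    have "norm (x k) \<le> norm xbar + norm (x k - xbar)" by (rule norm_triangle_sub)
    also have "norm (x k - xbar) = n k" unfolding n_def by (simp add: norm_minus_commute)
    finally show ?thesis using nle[of k] unfolding R_def by simp
  qed
  have "compact (g ` cball 0 (R+1))"
    by (rule compact_continuous_image[OF continuous_on_subset[OF cont] compact_cball]) simp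
  then obtain B where B: "\<forall>y\<in>g ` cball 0 (R+1). \<bar>y\<bar> \<le> B"
    using compact_imp_bounded bounded_real by metis
  have gB: "\<bar>g y\<bar> \<le> B" if "norm y \<le> R + 1" for y using B that by auto
  have B0: "B \<ge> 0" using gB[of 0] R0 by simp
  define L where "L = 2 * B"
  have L0: "L \<ge> 0" unfolding L_def using B0 by simp
  have sB: "norm (s k) \<le> L" for k
  proof (cases "s k = 0")
    case True
    then show ?thesis using L0 by simp
  next
    case False
    define y where "y = x k + (1 / norm (s k)) *\<^sub>R s k"
    have "norm y \<le> norm (x k) + norm ((1 / norm (s k)) *\<^sub>R s k)"
      unfolding y_def by (rule norm_triangle_ineq)
    also have "norm ((1 / norm (s k)) *\<^sub>R s k) = 1" using False by simp
    finally have ny: "norm y \<le> R + 1" using xR[of k] by simp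
    have "inner (s k) (y - x k) = norm (s k)"
      using False unfolding y_def by (simp add: dot_square_norm power2_eq_square)
    then have "g y \<ge> g (x k) + norm (s k)" using subg[of k y] by simp
    moreover have "\<bar>g y\<bar> \<le> B" using gB ny by simp
    moreover have "\<bar>g (x k)\<bar> \<le> B" using gB xR[of k] by simp
    ultimately show ?thesis unfolding L_def by linarith
  qed
  have gle: "g (x k) \<le> L * e k" for k
  proof -
    have "g (x k) + inner (x (Suc k) - x k) (s k) \<le> 0" using xin[of k] unfolding D_def by simp
    moreover have "\<bar>inner (x (Suc k) - x k) (s k)\<bar> \<le> e k * norm (s k)"
      unfolding e_def by (rule Cauchy_Schwarz_ineq2)
    moreover have "e k * norm (s k) \<le> e k * L"
      using sB[of k] unfolding e_def by (intro mult_left_mono) auto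
    ultimately show ?thesis by (simp add: mult.commute)
  qed
  define Q where "Q = (R + norm z) / (- g z)"
  have Q0: "Q \<ge> 0" unfolding Q_def using z R0 by (intro divide_nonneg_pos) auto
  have vle: "v k \<le> (2 * d * Q) * g (x k)" for k
  proof -
    define t where "t = g (x k) / (g (x k) - g z)"
    have gk: "g (x k) > 0" by (rule pos)
    have den: "g (x k) - g z > 0" using gk z by simp
    have t0: "t \<ge> 0" "t \<le> 1" unfolding t_def using gk z den by (auto simp: field_simps)
    have mp: "(g (x k) - g z) * (- g z) > 0" using den z by (intro mult_pos_pos) auto
    have tle: "t \<le> g (x k) / (- g z)"
      unfolding t_def using gk z den mp by (intro divide_left_mono) auto
    define y where "y = (1 - t) *\<^sub>R x k + t *\<^sub>R z"
    have "g y \<le> (1 - t) * g (x k) + t * g z"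
      unfolding y_def by (rule convex_onD[OF conv t0]) auto
    also have "(1 - t) * g (x k) + t * g z = 0"
      unfolding t_def using den by (simp add: field_simps)
    finally have "y \<in> C" unfolding C_def by simp
    then have "d \<le> dist xbar y" unfolding d_def by (rule infdist_le)
    also have "xbar - y = (xbar - x k) + t *\<^sub>R (x k - z)"
      unfolding y_def by (simp add: algebra_simps)
    then have "dist xbar y \<le> n k + t * norm (x k - z)"
      unfolding n_def dist_norm by (metis norm_triangle_ineq norm_scaleR abs_of_nonneg t0(1))
    also have "t * norm (x k - z) \<le> t * (R + norm z)"
      using xR[of k] norm_triangle_ineq4[of "x k" z] t0 by (intro mult_left_mono) auto
    also have "t * (R + norm z) \<le> g (x k) / (- g z) * (R + norm z)"
      using R0 tle by (intro mult_right_mono) auto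
    finally have dle: "d - n k \<le> g (x k) * Q" unfolding Q_def by simp
    have "v k = (d - n k) * (d + n k)" unfolding v_def by (simp add: power2_eq_square algebra_simps)
    also have "\<dots> \<le> (g (x k) * Q) * (d + n k)"
      using dle n0[of k] d0 by (intro mult_right_mono) auto
    also have "\<dots> \<le> (g (x k) * Q) * (2 * d)"
      using nle[of k] gk Q0 by (intro mult_left_mono) auto
    finally show ?thesis by (simp add: algebra_simps)
  qed
  define A where "A = 2 * d * Q * L + 1"
  have A0: "A > 0" unfolding A_def using d0 Q0 L0 by (simp add: add_nonneg_pos)
  have vnn: "v k \<ge> 0" for k
    unfolding v_def using nle[of k] n0[of k] by (simp add: power_mono)
  have vA: "v k \<le> A * e k" for k
  proof -
    have "v k \<le> (2 * d * Q) * (L * e k)"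
      using vle[of k] gle[of k] d0 Q0 by (meson mult_left_mono order_trans zero_le_mult_iff zero_le_numeral)
    also have "\<dots> \<le> A * e k" unfolding A_def e_def by (simp add: algebra_simps)
    finally show ?thesis .
  qed
  have pyth: "(n (Suc k))\<^sup>2 \<ge> (n k)\<^sup>2 + (e k)\<^sup>2" if k1: "k \<ge> 1" for k
  proof -
    obtain j where j: "k = Suc j" using k1 by (cases k) auto
    define a where "a = xbar - x k"
    define w where "w = x (Suc k) - x k"
    have "x (Suc k) \<in> H k" using xin[of k] unfolding D_def by simp
    then have iw: "inner a w \<le> 0" unfolding a_def w_def using Hstep[of j] j by simp
    have "xbar - x (Suc k) = a - w" unfolding a_def w_def by simp
    then have "(n (Suc k))\<^sup>2 = (norm a)\<^sup>2 - 2 * inner a w + (norm w)\<^sup>2"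
      unfolding n_def by (simp add: power2_norm_eq_inner inner_diff_left inner_diff_right inner_commute)
    then show ?thesis using iw unfolding n_def e_def a_def w_def by simp
  qed
  have dec: "v (Suc k) \<le> v k - (1 / A\<^sup>2) * (v k)\<^sup>2" if "k \<ge> 1" for k
  proof -
    have "(v k)\<^sup>2 \<le> (A * e k)\<^sup>2" using vA[of k] vnn[of k] by (rule power_mono)
    then have "(1 / A\<^sup>2) * (v k)\<^sup>2 \<le> (e k)\<^sup>2" using A0 by (simp add: field_simps power_mult_distrib)
    then show ?thesis using pyth[OF that] unfolding v_def by simp
  qed
  have "\<forall>k\<ge>1. v k \<le> max (v 1) (1 / (1 / A\<^sup>2)) / real k"
    by (rule rate_lemma) (use A0 vnn dec in auto)
  then show ?thesis unfolding v_def n_def d_def C_def by blast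
qed

end
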